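(* Let $n\ge 3$. For the power graph $P(G(n))$ of the gyrogroup $G(n)$ (defined in the context), $$dis(P(G(n)),i)=\begin{cases}2^n, & i=0,\\ \dfrac{2^{n-1}(2^{n-1}+1)}{2}, & i=1,\\ \dfrac{3\cdot 2^{n-1}(2^{n-1}-1)}{2}, & i=2.\end{cases}$$
   Context: Let $n\ge 3$ be an integer and $m=2^{n-1}$. Let $P(n)=\{0,1,\dots,m-1\}$, $H(n)=\{m,m+1,\dots,2^n-1\}$ and $G(n)=P(n)\cup H(n)$. For $i,j\in G(n)$ let $t,s,k\in P(n)$ be the residues modulo $m$ (taken in $\{0,\dots,m-1\}$) of $i+j$, $i+(\frac m2-1)j$ and $(\frac m2+1)i+(\frac m2-1)j$, respectively, and define $i\oplus j=t$ if $i,j\in P(n)$; $i\oplus j=t+m$ if $i\in P(n),j\in H(n)$; $i\oplus j=s+m$ if $i\in H(n),j\in P(n)$; $i\oplus j=k$ if $i,j\in H(n)$. Then $(G(n),\oplus)$ is a gyrogroup with identity $e=0$. Powers are defined by $a^1=a$, $a^{k+1}=a^k\oplus a$. The power graph $P(G(n))$ is the simple undirected graph with vertex set $G(n)$ in which distinct vertices $u,v$ are adjacent if and only if $u^k=v$ or $v^k=u$ for some positive integer $k$. For a connected graph $G$ with distance function $d$, $dis(G,i)$ denotes the number of unordered pairs $\{u,v\}$ of vertices (with $u=v$ allowed) such that $d(u,v)=i$. *)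

theory Defs
  imports Main
begin

text \<open>The gyrogroup G(n) on carrier {0..<2^n}, with m = 2^(n-1),
  P(n) = {0..<m}, H(n) = {m..<2^n}.\<close>

definition gcar :: "nat \<Rightarrow> nat set" where
  "gcar n = {0..<2^n}"

definition gop :: "nat \<Rightarrow> nat \<Rightarrow> nat \<Rightarrow> nat" where
  "gop n i j =
     (let m = 2^(n-1);
          t = (i + j) mod m;
          s = (i + (m div 2 - 1) * j) mod m;
          k = ((m div 2 + 1) * i + (m div 2 - 1) * j) mod m
      in if i < m \<and> j < m then t
         else if i < m \<and> m \<le> j then t + m
         else if m \<le> i \<and> j < m then s + m
         else k)"

text \<open>Powers: a^1 = a, a^(k+1) = a^k \<oplus> a (the value at 0 is irrelevant).\<close>
fun gpow :: "nat \<Rightarrow> nat \<Rightarrow> nat \<Rightarrow> nat" where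
  "gpow n a 0 = 0"
| "gpow n a (Suc 0) = a"
| "gpow n a (Suc (Suc k)) = gop n (gpow n a (Suc k)) a"

definition padj :: "nat \<Rightarrow> nat \<Rightarrow> nat \<Rightarrow> bool" where
  "padj n u v \<longleftrightarrow> u \<in> gcar n \<and> v \<in> gcar n \<and> u \<noteq> v \<and>
     (\<exists>k\<ge>1. gpow n u k = v \<or> gpow n v k = u)"

fun pwalk :: "nat \<Rightarrow> nat \<Rightarrow> nat \<Rightarrow> nat \<Rightarrow> bool" where
  "pwalk n 0 u v \<longleftrightarrow> u = v \<and> u \<in> gcar n"
| "pwalk n (Suc k) u v \<longleftrightarrow> (\<exists>w. padj n u w \<and> pwalk n k w v)"

text \<open>Graph distance (the graph is connected).\<close>
definition pdist :: "nat \<Rightarrow> nat \<Rightarrow> nat \<Rightarrow> nat" where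
  "pdist n u v = (LEAST k. pwalk n k u v)"

definition dis :: "nat \<Rightarrow> nat \<Rightarrow> nat" where
  "dis n i = card {{u, v} | u v. u \<in> gcar n \<and> v \<in> gcar n \<and> pdist n u v = i}"

end

theory Submission imports Defs "HOL-Number_Theory.Number_Theory" begin

lemma gop_PP: "m = 2^(n-1) \<Longrightarrow> x < m \<Longrightarrow> a < m \<Longrightarrow> gop n x a = (x+a) mod m"
  by (simp add: gop_def Let_def)

lemma gpow_P: assumes "m = 2^(n-1)" "a < m"
  shows "gpow n a (Suc k) = (Suc k * a) mod m"
proof (induction k)
  case 0 then show ?case using assms by simp
next
  case (Suc k)
  have "m > 0" using assms by simp
  have "gpow n a (Suc (Suc k)) = gop n ((Suc k * a) mod m) a" using Suc by simp
  also have "\<dots> = ((Suc k * a) mod m + a) mod m"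
    using gop_PP[OF assms(1) _ assms(2)] \<open>m > 0\<close> by simp
  also have "\<dots> = (Suc k * a + a) mod m" by (rule mod_add_left_eq)
  also have "\<dots> = (Suc (Suc k) * a) mod m" by (simp add: add.commute)
  finally show ?case .
qed

lemma gpow_H: assumes "m = 2^(n-1)" "n \<ge> 2" "m \<le> a" "a < 2*m"
  shows "gpow n a (Suc k) = (if even k then a else 0)"
proof (induction k)
  case 0 then show ?case by simp
next
  case (Suc k)
  define q where "q = (2::nat)^(n-2)"
  have "n - 1 = Suc (n-2)" using assms(2) by simp
  then have q: "m = 2*q" "q \<ge> 1" using assms(1) by (simp_all add: q_def)
  have aa: "gop n a a = 0"
  proof -
    have e: "(q + 1) * a + (q - 1) * a = m * a" using q by (cases q) (simp_all add: algebra_simps)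
    have "gop n a a = ((m div 2 + 1) * a + (m div 2 - 1) * a) mod m"
      unfolding gop_def Let_def assms(1)[symmetric] using assms(3,4) by simp
    also have "\<dots> = ((q + 1) * a + (q - 1) * a) mod m" using q by simp
    also have "\<dots> = 0" using e by simp
    finally show ?thesis .
  qed
  have a0: "gop n 0 a = a" using assms q by (simp add: gop_def Let_def le_mod_geq)
  show ?case
  proof (cases "even k")
    case True
    then show ?thesis using Suc aa by simp
  next
    case False
    then show ?thesis using Suc a0 by simp
  qed
qed

lemma P_complete: assumes "m = (2::nat)^r" "u < m" "v < m"
  shows "\<exists>k\<ge>1. (k*u) mod m = v \<or> (k*v) mod m = u"
proof -
  have pr: "prime (2::nat)" by simp
  have "gcd u m dvd 2^r" using assms(1) by simp
  then obtain i where i: "gcd u m = 2^i" using divides_primepow_nat[OF pr] by blast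
  have "gcd v m dvd 2^r" using assms(1) by simp
  then obtain j where j: "gcd v m = 2^j" using divides_primepow_nat[OF pr] by blast
  have shift: "\<exists>k\<ge>1. (k*a) mod m = b" if "[a * x = b] (mod m)" "b < m" for a b x
  proof -
    have "((x + m) * a) mod m = (a * x + m * a) mod m" by (simp add: algebra_simps)
    also have "\<dots> = (a*x) mod m" by simp
    also have "\<dots> = b" using that by (simp add: cong_def)
    finally show ?thesis using assms by (intro exI[of _ "x+m"]) auto
  qed
  show ?thesis
  proof (cases "i \<le> j")
    case True
    then have "gcd u m dvd gcd v m" using i j by (simp add: le_imp_power_dvd)
    then have "gcd u m dvd v" using dvd_trans by blast
    then obtain x where "[u * x = v] (mod m)" using cong_solve_dvd_nat by blast
    then show ?thesis using shift assms by blast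
  next
    case False
    then have "gcd v m dvd gcd u m" using i j by (simp add: le_imp_power_dvd)
    then have "gcd v m dvd u" using dvd_trans by blast
    then obtain x where "[v * x = u] (mod m)" using cong_solve_dvd_nat by blast
    then show ?thesis using shift assms by blast
  qed
qed

lemma gpow_gen: assumes "m = 2^(n-1)" "n \<ge> 2" "x < 2*m"
  shows "gpow n x (Suc k) = (if x < m then (Suc k * x) mod m else if even k then x else 0)"
  using gpow_P[OF assms(1)] gpow_H[OF assms(1,2) _ assms(3)] by simp

lemma gcar_eq: "n \<ge> 2 \<Longrightarrow> gcar n = {0..<2*2^(n-1)}"
  unfolding gcar_def by (cases n) auto

lemma padj_iff: assumes "m = 2^(n-1)" "n \<ge> 2"
  shows "padj n u v \<longleftrightarrow> u < 2*m \<and> v < 2*m \<and> u \<noteq> v \<and>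
     ((u < m \<and> v < m) \<or> (u = 0 \<and> m \<le> v) \<or> (v = 0 \<and> m \<le> u))"
proof
  assume a: "padj n u v"
  then have uv: "u < 2*m" "v < 2*m" "u \<noteq> v" using gcar_eq[OF assms(2)] assms(1)
    unfolding padj_def by auto
  from a obtain k where k: "k \<ge> 1" "gpow n u k = v \<or> gpow n v k = u" unfolding padj_def by blast
  then obtain k' where k': "k = Suc k'" by (cases k) auto
  have m0: "m > 0" using assms by simp
  show "u < 2*m \<and> v < 2*m \<and> u \<noteq> v \<and>
     ((u < m \<and> v < m) \<or> (u = 0 \<and> m \<le> v) \<or> (v = 0 \<and> m \<le> u))"
    using k(2) uv m0 unfolding k' gpow_gen[OF assms uv(1)] gpow_gen[OF assms uv(2)]
    by (auto split: if_splits)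
next
  assume a: "u < 2*m \<and> v < 2*m \<and> u \<noteq> v \<and>
     ((u < m \<and> v < m) \<or> (u = 0 \<and> m \<le> v) \<or> (v = 0 \<and> m \<le> u))"
  have car: "u \<in> gcar n" "v \<in> gcar n" using a gcar_eq[OF assms(2)] assms(1) by auto
  have "\<exists>k\<ge>1. gpow n u k = v \<or> gpow n v k = u"
  proof -
    { assume b: "u < m" "v < m"
      obtain k where k: "k \<ge> 1" "(k*u) mod m = v \<or> (k*v) mod m = u"
        using P_complete[OF assms(1) b] by blast
      then obtain k' where k': "k = Suc k'" by (cases k) auto
      have ?thesis using k gpow_P[OF assms(1) b(1)] gpow_P[OF assms(1) b(2)] unfolding k' by blast }
    moreover
    { assume b: "u = 0" "m \<le> v"
      have "gpow n v 2 = u" using gpow_H[OF assms b(2), of 1] a b by (simp add: numeral_2_eq_2)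
      then have ?thesis by (intro exI[of _ 2]) auto }
    moreover
    { assume b: "v = 0" "m \<le> u"
      have "gpow n u 2 = v" using gpow_H[OF assms b(2), of 1] a b by (simp add: numeral_2_eq_2)
      then have ?thesis by (intro exI[of _ 2]) auto }
    ultimately show ?thesis using a by blast
  qed
  then show "padj n u v" unfolding padj_def using car a by blast
qed

lemma pdist_val: assumes "m = (2::nat)^(n-1)" "n \<ge> 2" "u \<in> gcar n" "v \<in> gcar n"
  shows "pdist n u v = (if u = v then 0 else if padj n u v then 1 else 2)"
proof -
  have w1: "pwalk n (Suc 0) u v \<longleftrightarrow> padj n u v" by (auto simp: padj_def)
  have m0: "m > 0" using assms by simp
  show ?thesis
  proof (cases "u = v")
    case True
    then show ?thesis unfolding pdist_def using assms by (simp add: Least_eq_0)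
  next
    case F: False
    show ?thesis
    proof (cases "padj n u v")
      case True
      have "(LEAST k. pwalk n k u v) = 1"
      proof (rule Least_equality)
        show "pwalk n 1 u v" using w1 True by simp
        fix y assume "pwalk n y u v" then show "1 \<le> y" using F by (cases y) auto
      qed
      then show ?thesis using F True unfolding pdist_def by simp
    next
      case NA: False
      have u: "u < 2*m" and v: "v < 2*m" using assms gcar_eq by auto
      have u0: "u \<noteq> 0" using NA F u v padj_iff[OF assms(1,2), of u v] m0 by auto
      have v0: "v \<noteq> 0" using NA F u v padj_iff[OF assms(1,2), of u v] m0 by auto
      have "padj n u 0" using padj_iff[OF assms(1,2), of u 0] u u0 m0 by auto
      moreover have "padj n 0 v" using padj_iff[OF assms(1,2), of 0 v] v v0 m0 by auto
      ultimately have w2: "pwalk n 2 u v" using assms(4) by (auto simp: numeral_2_eq_2)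
      have "(LEAST k. pwalk n k u v) = 2"
      proof (rule Least_equality)
        show "pwalk n 2 u v" by (rule w2)
        fix y assume y: "pwalk n y u v"
        show "2 \<le> y"
        proof (rule ccontr)
          assume "\<not> 2 \<le> y"
          then have "y = 0 \<or> y = Suc 0" by auto
          then show False using y F NA w1 by auto
        qed
      qed
      then show ?thesis using F NA unfolding pdist_def by simp
    qed
  qed
qed

lemma card_pairs: "card {B. B \<subseteq> {a..<(b::nat)} \<and> card B = 2} = (b - a) choose 2"
  using n_subsets[of "{a..<b}" 2] by simp

theorem mainTheorem3:
  fixes n :: nat
  assumes "n \<ge> 3"
  shows "dis n 0 = 2^n \<and>
         dis n 1 = 2^(n-1) * (2^(n-1) + 1) div 2 \<and>
         dis n 2 = 3 * 2^(n-1) * (2^(n-1) - 1) div 2"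
proof -
  define m where "m = (2::nat)^(n-1)"
  have n2: "n \<ge> 2" using assms by simp
  have m0: "m > 0" unfolding m_def by simp
  have car: "gcar n = {0..<2*m}" using gcar_eq[OF n2] m_def by simp
  have pn: "2^n = 2*m" using n2 unfolding m_def by (cases n) auto
  note pd = pdist_val[OF m_def n2]
  note pa = padj_iff[OF m_def n2]
  have d0: "dis n 0 = 2^n"
  proof -
    have "{{u, v} | u v. u \<in> gcar n \<and> v \<in> gcar n \<and> pdist n u v = 0} = (\<lambda>u. {u}) ` {0..<2*m}"
    proof (intro equalityI subsetI)
      fix B assume "B \<in> {{u, v} | u v. u \<in> gcar n \<and> v \<in> gcar n \<and> pdist n u v = 0}"
      then obtain u v where "B = {u,v}" "u \<in> gcar n" "v \<in> gcar n" "pdist n u v = 0" by blast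
      moreover then have "u = v" using pd[of u v] by (simp split: if_splits)
      ultimately show "B \<in> (\<lambda>u. {u}) ` {0..<2*m}" using car by auto
    next
      fix B assume "B \<in> (\<lambda>u. {u}) ` {0..<2*m}"
      then obtain u where "B = {u,u}" "u \<in> gcar n" using car by auto
      moreover then have "pdist n u u = 0" using pd[of u u] by simp
      ultimately show "B \<in> {{u, v} | u v. u \<in> gcar n \<and> v \<in> gcar n \<and> pdist n u v = 0}" by blast
    qed
    then show ?thesis unfolding dis_def using pn by (simp add: card_image)
  qed
  have d1: "dis n 1 = m * (m + 1) div 2"
  proof -
    have "{{u, v} | u v. u \<in> gcar n \<and> v \<in> gcar n \<and> pdist n u v = 1} =
       {B. B \<subseteq> {0..<m} \<and> card B = 2} \<union> (\<lambda>h. {0,h}) ` {m..<2*m}" (is "?L = ?R")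
    proof
      show "?L \<subseteq> ?R"
      proof
        fix B assume "B \<in> ?L"
        then obtain u v where B: "B = {u,v}" "u \<in> gcar n" "v \<in> gcar n" "pdist n u v = 1" by blast
        have e: "(if u = v then 0 else if padj n u v then 1 else 2) = (1::nat)" using pd[OF B(2,3)] B(4) by simp
        then have "padj n u v" "u \<noteq> v" by (auto split: if_splits)
        then have c: "u < 2*m" "v < 2*m" "u \<noteq> v"
          "(u < m \<and> v < m) \<or> (u = 0 \<and> m \<le> v) \<or> (v = 0 \<and> m \<le> u)" using pa by auto
        show "B \<in> ?R"
        proof -
          { assume "u < m \<and> v < m" then have ?thesis using B c by auto }
          moreover { assume "u = 0 \<and> m \<le> v" then have ?thesis using B c by auto }
          moreover { assume "v = 0 \<and> m \<le> u" then have ?thesis using B c by (auto simp: insert_commute) }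
          ultimately show ?thesis using c by blast
        qed
      qed
    next
      show "?R \<subseteq> ?L"
      proof
        fix B assume "B \<in> ?R"
        then show "B \<in> ?L"
        proof
          assume "B \<in> {B. B \<subseteq> {0..<m} \<and> card B = 2}"
          then have "B \<subseteq> {0..<m}" "card B = 2" by auto
          then obtain x y where xy: "B = {x,y}" "x \<noteq> y" "x < m" "y < m"
            unfolding card_2_iff by auto
          then have "pdist n x y = 1" using pd[of x y] pa[of x y] car by auto
          moreover have "x \<in> gcar n" "y \<in> gcar n" using xy car by auto
          ultimately show ?thesis using xy by blast
        next
          assume "B \<in> (\<lambda>h. {0,h}) ` {m..<2*m}"
          then obtain h where xy: "B = {0,h}" "m \<le> h" "h < 2*m" by auto
          then have "pdist n 0 h = 1" using pd[of 0 h] pa[of 0 h] car m0 by auto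
          moreover have "0 \<in> gcar n" "h \<in> gcar n" using xy car by auto
          ultimately show ?thesis using xy by blast
        qed
      qed
    qed
    moreover have "card ?R = m * (m - 1) div 2 + m"
    proof -
      have "inj_on (\<lambda>h. {0,h}) {m..<2*m}" using m0 by (auto simp: inj_on_def doubleton_eq_iff)
      then have "card ((\<lambda>h. {0,h}) ` {m..<2*m}) = m" by (simp add: card_image)
      moreover have "{B. B \<subseteq> {0..<m} \<and> card B = 2} \<inter> (\<lambda>h. {0,h}) ` {m..<2*m} = {}" by auto
      moreover have "finite {B. B \<subseteq> {0..<m} \<and> card B = 2}"
        by (rule finite_subset[of _ "Pow {0..<m}"]) auto
      ultimately show ?thesis using card_pairs[of 0 m]
        card_Un_disjoint[of "{B. B \<subseteq> {0..<m} \<and> card B = 2}" "(\<lambda>h. {0,h}) ` {m..<2*m}"]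
        by (simp only: choose_two) simp
    qed
    ultimately have "dis n 1 = m * (m - 1) div 2 + m" unfolding dis_def by simp
    moreover have "m * (m + 1) = m * (m - 1) + 2 * m" using m0 by (cases m) (simp_all add: algebra_simps)
    ultimately show ?thesis by simp
  qed
  have d2: "dis n 2 = 3 * m * (m - 1) div 2"
  proof -
    have "{{u, v} | u v. u \<in> gcar n \<and> v \<in> gcar n \<and> pdist n u v = 2} =
       {B. B \<subseteq> {m..<2*m} \<and> card B = 2} \<union> (\<lambda>(p,h). {p,h}) ` ({1..<m} \<times> {m..<2*m})" (is "?L = ?R")
    proof
      show "?L \<subseteq> ?R"
      proof
        fix B assume "B \<in> ?L"
        then obtain u v where B: "B = {u,v}" "u \<in> gcar n" "v \<in> gcar n" "pdist n u v = 2" by blast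
        have e: "(if u = v then 0 else if padj n u v then 1 else 2) = (2::nat)" using pd[OF B(2,3)] B(4) by simp
        then have "\<not> padj n u v" "u \<noteq> v" by (auto split: if_splits)
        then have c: "u < 2*m" "v < 2*m" "u \<noteq> v"
          "\<not> ((u < m \<and> v < m) \<or> (u = 0 \<and> m \<le> v) \<or> (v = 0 \<and> m \<le> u))" using pa B car by auto
        show "B \<in> ?R"
        proof (cases "u < m")
          case True
          then have "(u, v) \<in> {1..<m} \<times> {m..<2*m}" using c by auto
          then show ?thesis using B by force
        next
          case False
          show ?thesis
          proof (cases "v < m")
            case True
            then have "(v, u) \<in> {1..<m} \<times> {m..<2*m}" using c False by auto
            moreover have "B = {v,u}" using B by auto
            ultimately show ?thesis by force
          next
            case F2: False
            then show ?thesis using B c False by auto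
          qed
        qed
      qed
    next
      show "?R \<subseteq> ?L"
      proof
        fix B assume "B \<in> ?R"
        then show "B \<in> ?L"
        proof
          assume "B \<in> {B. B \<subseteq> {m..<2*m} \<and> card B = 2}"
          then have "B \<subseteq> {m..<2*m}" "card B = 2" by auto
          then obtain x y where xy: "B = {x,y}" "x \<noteq> y" "m \<le> x" "m \<le> y" "x < 2*m" "y < 2*m"
            unfolding card_2_iff by auto
          then have "pdist n x y = 2" using pd[of x y] pa[of x y] car m0 by auto
          moreover have "x \<in> gcar n" "y \<in> gcar n" using xy car by auto
          ultimately show ?thesis using xy by blast
        next
          assume "B \<in> (\<lambda>(p,h). {p,h}) ` ({1..<m} \<times> {m..<2*m})"
          then obtain p h where xy: "B = {p,h}" "1 \<le> p" "p < m" "m \<le> h" "h < 2*m" by auto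
          then have "pdist n p h = 2" using pd[of p h] pa[of p h] car m0 by auto
          moreover have "p \<in> gcar n" "h \<in> gcar n" using xy car by auto
          ultimately show ?thesis using xy by blast
        qed
      qed
    qed
    moreover have "card ?R = m * (m - 1) div 2 + (m - 1) * m"
    proof -
      have "inj_on (\<lambda>(p,h). {p,h}) ({1..<m} \<times> {m..<2*m})"
        by (auto simp: inj_on_def doubleton_eq_iff)
      then have "card ((\<lambda>(p,h). {p,h}) ` ({1..<m} \<times> {m..<2*m})) = (m - 1) * m"
        by (simp add: card_image card_cartesian_product)
      moreover have "{B. B \<subseteq> {m..<2*m} \<and> card B = 2} \<inter> (\<lambda>(p,h). {p,h}) ` ({1..<m} \<times> {m..<2*m}) = {}"
        by auto
      moreover have "finite {B. B \<subseteq> {m..<2*m} \<and> card B = 2}"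
        by (rule finite_subset[of _ "Pow {m..<2*m}"]) auto
      ultimately show ?thesis using card_pairs[of m "2*m"]
        card_Un_disjoint[of "{B. B \<subseteq> {m..<2*m} \<and> card B = 2}" "(\<lambda>(p,h). {p,h}) ` ({1..<m} \<times> {m..<2*m})"]
        by (simp only: choose_two) simp
    qed
    ultimately have "dis n 2 = m * (m - 1) div 2 + (m - 1) * m" unfolding dis_def by simp
    moreover have "(x::nat) div 2 + x = 3 * x div 2" for x by presburger
    moreover have "3 * m * (m - 1) = 3 * (m * (m - 1))" "(m - 1) * m = m * (m - 1)" by simp_all
    ultimately show ?thesis by metis
  qed
  show ?thesis using d0 d1 d2 m_def by simp
qed

end
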